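(* Every absolutely flat (von Neumann regular) commutative ring $S$ has strong avoidance.
   Context: All rings are commutative with $1\neq 0$. A ring map $\phi:R\to S$ has avoidance if whenever $I,I_1,\ldots,I_n$ are ideals of $R$ with $I\subseteq\bigcup_{k=1}^n I_k$, then $IS\subseteq I_kS$ for some $k$ (where $IS$ denotes the extension of $I$ to $S$). A ring $S$ has strong avoidance if every ring map $R\to S$ has avoidance. *)

theory Defs
  imports Main
begin

definition cr_ideal :: "'a::comm_ring_1 set \<Rightarrow> bool" where
  "cr_ideal I \<longleftrightarrow> 0 \<in> I \<and> (\<forall>x\<in>I. \<forall>y\<in>I. x + y \<in> I) \<and> (\<forall>x\<in>I. \<forall>r. r * x \<in> I)"

definition ideal_gen :: "'a::comm_ring_1 set \<Rightarrow> 'a set" where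
  "ideal_gen A = \<Inter> {J. cr_ideal J \<and> A \<subseteq> J}"

definition cr_hom :: "('r::comm_ring_1 \<Rightarrow> 's::comm_ring_1) \<Rightarrow> bool" where
  "cr_hom f \<longleftrightarrow> f 1 = 1 \<and> (\<forall>x y. f (x + y) = f x + f y) \<and> (\<forall>x y. f (x * y) = f x * f y)"

definition ext_ideal :: "('r::comm_ring_1 \<Rightarrow> 's::comm_ring_1) \<Rightarrow> 'r set \<Rightarrow> 's set" where
  "ext_ideal f I = ideal_gen (f ` I)"

definition has_avoidance :: "('r::comm_ring_1 \<Rightarrow> 's::comm_ring_1) \<Rightarrow> bool" where
  "has_avoidance f \<longleftrightarrow>
     (\<forall>(I :: 'r set) (n :: nat) (Is :: nat \<Rightarrow> 'r set).
        cr_ideal I \<longrightarrow> (\<forall>k\<in>{1..n}. cr_ideal (Is k)) \<longrightarrow> I \<subseteq> (\<Union>k\<in>{1..n}. Is k) \<longrightarrow>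
        (\<exists>k\<in>{1..n}. ext_ideal f I \<subseteq> ext_ideal f (Is k)))"

definition von_neumann_regular :: "'a::comm_ring_1 itself \<Rightarrow> bool" where
  "von_neumann_regular _ \<longleftrightarrow> (\<forall>a::'a. \<exists>x. a = a * a * x)"

end

theory Submission
  imports Defs
begin

definition pr_ideal :: "'a::comm_ring_1 set \<Rightarrow> bool" where
  "pr_ideal q \<longleftrightarrow> cr_ideal q \<and> 1 \<notin> q \<and> (\<forall>a b. a * b \<in> q \<longrightarrow> a \<in> q \<or> b \<in> q)"

lemma ideal_gen_ideal: "cr_ideal (ideal_gen A)"
  unfolding ideal_gen_def cr_ideal_def by auto

lemma ideal_gen_sub: "A \<subseteq> ideal_gen A"
  unfolding ideal_gen_def by auto

lemma ideal_gen_least: "cr_ideal J \<Longrightarrow> A \<subseteq> J \<Longrightarrow> ideal_gen A \<subseteq> J"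
  unfolding ideal_gen_def by auto

lemma ideal_mult_r: "cr_ideal J \<Longrightarrow> x \<in> J \<Longrightarrow> x * r \<in> J"
  unfolding cr_ideal_def by (metis mult.commute)

lemma ideal_mult_l: "cr_ideal J \<Longrightarrow> x \<in> J \<Longrightarrow> r * x \<in> J"
  unfolding cr_ideal_def by blast

lemma ideal_add: "cr_ideal J \<Longrightarrow> x \<in> J \<Longrightarrow> y \<in> J \<Longrightarrow> x + y \<in> J"
  unfolding cr_ideal_def by blast

lemma ideal_0: "cr_ideal J \<Longrightarrow> 0 \<in> J"
  unfolding cr_ideal_def by blast

lemma prime_prod:
  assumes "finite A" "pr_ideal q" "(\<Prod>j\<in>A. x j) \<in> q"
  shows "\<exists>j\<in>A. x j \<in> q"
  using assms
proof (induction A rule: finite_induct)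
  case empty then show ?case by (simp add: pr_ideal_def)
next
  case (insert a A)
  then have "x a * (\<Prod>j\<in>A. x j) \<in> q" by simp
  then have "x a \<in> q \<or> (\<Prod>j\<in>A. x j) \<in> q" using insert(4) unfolding pr_ideal_def by blast
  then show ?case using insert by blast
qed

lemma ideal_prod:
  assumes "finite A" "cr_ideal q" "k \<in> A" "x k \<in> q"
  shows "(\<Prod>j\<in>A. x j) \<in> q"
proof -
  have "(\<Prod>j\<in>A. x j) = x k * (\<Prod>j\<in>A-{k}. x j)"
    using assms by (simp add: prod.remove)
  then show ?thesis using ideal_mult_r[OF assms(2) assms(4)] by simp
qed

lemma prime_avoid:
  fixes I :: "'a::comm_ring_1 set"
  assumes "finite K" "cr_ideal I" "\<forall>k\<in>K. pr_ideal (q k)" "I \<subseteq> (\<Union>k\<in>K. q k)"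
  shows "\<exists>k\<in>K. I \<subseteq> q k"
  using assms
proof (induction K rule: finite_psubset_induct)
  case (psubset K)
  show ?case
  proof (rule ccontr)
    assume nk: "\<not> (\<exists>k\<in>K. I \<subseteq> q k)"
    have "\<forall>i\<in>K. \<exists>y. y \<in> I \<and> (\<forall>j\<in>K-{i}. y \<notin> q j)"
    proof
      fix i assume i: "i \<in> K"
      show "\<exists>y. y \<in> I \<and> (\<forall>j\<in>K-{i}. y \<notin> q j)"
      proof (rule ccontr)
        assume "\<not> ?thesis"
        then have "I \<subseteq> (\<Union>k\<in>K-{i}. q k)" by blast
        with psubset.IH[of "K-{i}"] i psubset.prems psubset.hyps
        obtain j where "j \<in> K-{i}" "I \<subseteq> q j" by blast
        with nk show False by blast
      qed
    qed
    then obtain x where x: "\<forall>i\<in>K. x i \<in> I \<and> (\<forall>j\<in>K-{i}. x i \<notin> q j)"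
      by metis
    have xq: "\<forall>i\<in>K. x i \<in> q i"
    proof
      fix i assume i: "i \<in> K"
      then have "x i \<in> I" using x by blast
      then obtain k where "k \<in> K" "x i \<in> q k" using psubset.prems(3) by blast
      then show "x i \<in> q i" using x i by blast
    qed
    have "K \<noteq> {}" using psubset.prems ideal_0[OF psubset.prems(1)] by blast
    then obtain i0 where i0: "i0 \<in> K" by blast
    define p where "p = (\<Prod>j\<in>K-{i0}. x j)"
    have pI: "p \<in> I"
    proof (cases "K - {i0} = {}")
      case True
      then have "K = {i0}" using i0 by blast
      then have False using nk psubset.prems(3) by auto
      then show ?thesis ..
    next
      case False
      then obtain k where "k \<in> K-{i0}" by blast
      then show ?thesis unfolding p_def
        using ideal_prod[of "K-{i0}" I k x] x psubset.hyps(1) psubset.prems(1) by blast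
    qed
    define y where "y = x i0 + p"
    have "y \<in> I" unfolding y_def using ideal_add[OF psubset.prems(1)] x i0 pI by blast
    then obtain k where k: "k \<in> K" "y \<in> q k" using psubset.prems(3) by blast
    show False
    proof (cases "k = i0")
      case True
      then have "p \<in> q i0"
        using k xq i0 psubset.prems(2)
        unfolding y_def pr_ideal_def cr_ideal_def
        by (metis add_diff_cancel_left' diff_conv_add_uminus mult_minus1 add.commute)
      then obtain j where "j \<in> K-{i0}" "x j \<in> q i0"
        using prime_prod[of "K-{i0}" "q i0" x] psubset.hyps(1) psubset.prems(2) i0 unfolding p_def by blast
      then show False using x i0 by blast
    next
      case False
      have qk: "cr_ideal (q k)" using psubset.prems(2) k unfolding pr_ideal_def by blast
      have "p \<in> q k" unfolding p_def
        using ideal_prod[OF _ qk, of "K-{i0}" k x] psubset.hyps(1) False k xq by blast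
      then have "x i0 \<in> q k" using k qk unfolding y_def cr_ideal_def
        by (metis add_diff_cancel_right' diff_conv_add_uminus mult_minus1)
      then show False using x i0 False k by blast
    qed
  qed
qed

lemma chain_union_ideal:
  assumes "C \<in> chains {M. cr_ideal M \<and> J \<subseteq> M \<and> e \<notin> M}" "C \<noteq> {}"
  shows "cr_ideal (\<Union>C)"
proof -
  have ch: "\<forall>A\<in>C. \<forall>B\<in>C. A \<subseteq> B \<or> B \<subseteq> A" and sub: "\<forall>A\<in>C. cr_ideal A"
    using assms(1) unfolding chains_def chain_subset_def by auto
  show ?thesis unfolding cr_ideal_def
  proof (intro conjI ballI allI)
    show "0 \<in> \<Union>C" using assms(2) sub ideal_0 by blast
  next
    fix a b assume "a \<in> \<Union>C" "b \<in> \<Union>C"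
    then obtain A B where AB: "A \<in> C" "B \<in> C" "a \<in> A" "b \<in> B" by blast
    then have "A \<subseteq> B \<or> B \<subseteq> A" using ch by blast
    then show "a + b \<in> \<Union>C" using AB sub ideal_add by blast
  next
    fix a r assume "a \<in> \<Union>C"
    then show "r * a \<in> \<Union>C" using sub ideal_mult_l by blast
  qed
qed

lemma vnr_prime:
  fixes J :: "'s::comm_ring_1 set"
  assumes vnr: "von_neumann_regular TYPE('s)" and J: "cr_ideal J" and xJ: "x \<notin> J"
  shows "\<exists>P. pr_ideal P \<and> J \<subseteq> P \<and> x \<notin> P"
proof -
  obtain y where y: "x = x * x * y" using vnr unfolding von_neumann_regular_def by blast
  define e where "e = x * y"
  have xe: "x = x * e" using y unfolding e_def by (simp add: mult.assoc)
  have ee: "e * e = e" unfolding e_def using y by (metis mult.assoc mult.commute)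
  have eJ: "e \<notin> J" using xe xJ ideal_mult_l[OF J] by metis
  define A where "A = {M. cr_ideal M \<and> J \<subseteq> M \<and> e \<notin> M}"
  have "\<forall>C\<in>chains A. \<exists>U\<in>A. \<forall>X\<in>C. X \<subseteq> U"
  proof
    fix C assume C: "C \<in> chains A"
    show "\<exists>U\<in>A. \<forall>X\<in>C. X \<subseteq> U"
    proof (cases "C = {}")
      case True then show ?thesis using J eJ unfolding A_def by blast
    next
      case False
      have "cr_ideal (\<Union>C)" using chain_union_ideal[of C J e] C False unfolding A_def by blast
      moreover have "J \<subseteq> \<Union>C" "e \<notin> \<Union>C" using C False unfolding A_def chains_def by blast+
      ultimately show ?thesis unfolding A_def by blast
    qed
  qed
  from Zorn_Lemma2[OF this] obtain M where M: "M \<in> A" and mx: "\<forall>X\<in>A. M \<subseteq> X \<longrightarrow> X = M" by blast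
  have MI: "cr_ideal M" "J \<subseteq> M" "e \<notin> M" using M unfolding A_def by auto
  have gen: "e \<in> {m + s * a |m s. m \<in> M}" if "a \<notin> M" for a
  proof (rule ccontr)
    assume ne: "e \<notin> {m + s * a |m s. m \<in> M}"
    let ?M = "{m + s * a |m s. m \<in> M}"
    have "cr_ideal ?M" unfolding cr_ideal_def
    proof (intro conjI ballI allI)
      show "0 \<in> ?M" using ideal_0[OF MI(1)] by (metis (mono_tags, lifting) add_0 mem_Collect_eq mult_zero_left)
    next
      fix u v assume "u \<in> ?M" "v \<in> ?M"
      then obtain m1 s1 m2 s2 where "u = m1 + s1 * a" "v = m2 + s2 * a" "m1 \<in> M" "m2 \<in> M" by blast
      then have "u + v = (m1 + m2) + (s1 + s2) * a" "m1 + m2 \<in> M"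
        using ideal_add[OF MI(1)] by (auto simp: algebra_simps)
      then show "u + v \<in> ?M" by blast
    next
      fix u r assume "u \<in> ?M"
      then obtain m1 s1 where "u = m1 + s1 * a" "m1 \<in> M" by blast
      then have "r * u = r * m1 + (r * s1) * a" "r * m1 \<in> M"
        using ideal_mult_l[OF MI(1)] by (auto simp: algebra_simps)
      then show "r * u \<in> ?M" by blast
    qed
    moreover have "M \<subseteq> ?M"
    proof
      fix m assume "m \<in> M"
      then show "m \<in> ?M" by (metis (mono_tags, lifting) add_0_right mem_Collect_eq mult_zero_left)
    qed
    moreover have "a \<in> ?M" using ideal_0[OF MI(1)]
      by (metis (mono_tags, lifting) add_0 mem_Collect_eq mult_1)
    ultimately have "?M \<in> A" "M \<subseteq> ?M" using MI ne unfolding A_def by auto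
    with mx have "?M = M" by blast
    with \<open>a \<in> ?M\<close> that show False by blast
  qed
  have "pr_ideal M" unfolding pr_ideal_def
  proof (intro conjI allI impI)
    show "cr_ideal M" by (rule MI(1))
    show "1 \<notin> M" using MI ideal_mult_l[OF MI(1), of 1 e] by auto
  next
    fix a b assume ab: "a * b \<in> M"
    show "a \<in> M \<or> b \<in> M"
    proof (rule ccontr)
      assume "\<not> (a \<in> M \<or> b \<in> M)"
      then obtain m1 s m2 t where e1: "e = m1 + s * a" "m1 \<in> M" and e2: "e = m2 + t * b" "m2 \<in> M"
        using gen by blast
      have "e = e * e" using ee by simp
      also have "\<dots> = (m1 + s * a) * (m2 + t * b)" using e1(1) e2(1) by metis
      also have "\<dots> = m1 * (m2 + t * b) + (s * a) * m2 + (s * t) * (a * b)"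
        by (simp add: algebra_simps)
      finally have "e \<in> M" using MI(1) e1 e2 ab
        by (metis ideal_add ideal_mult_l ideal_mult_r)
      then show False using MI by blast
    qed
  qed
  moreover have "x \<notin> M"
  proof
    assume "x \<in> M"
    then have "x * y \<in> M" using ideal_mult_r[OF MI(1)] by blast
    then show False using MI unfolding e_def by blast
  qed
  ultimately show ?thesis using MI by blast
qed

theorem proposition4p3:
  fixes f :: "'r::comm_ring_1 \<Rightarrow> 's::comm_ring_1"
  assumes "von_neumann_regular TYPE('s)"
    and "cr_hom f"
  shows "has_avoidance f"
  unfolding has_avoidance_def
proof (intro allI impI)
  fix I :: "'r set" and n :: nat and Is :: "nat \<Rightarrow> 'r set"
  assume I: "cr_ideal I" and Isid: "\<forall>k\<in>{1..n}. cr_ideal (Is k)"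
    and cov: "I \<subseteq> (\<Union>k\<in>{1..n}. Is k)"
  have f0: "f 0 = 0" using assms(2) unfolding cr_hom_def by (metis add_cancel_right_right)
  have fm: "\<And>x y. f (x * y) = f x * f y" and fa: "\<And>x y. f (x + y) = f x + f y" and f1: "f 1 = 1"
    using assms(2) unfolding cr_hom_def by auto
  have pre: "pr_ideal (f -` P)" if P: "pr_ideal P" for P
    unfolding pr_ideal_def cr_ideal_def
    using P f0 fm fa f1 unfolding pr_ideal_def cr_ideal_def by auto
  show "\<exists>k\<in>{1..n}. ext_ideal f I \<subseteq> ext_ideal f (Is k)"
  proof (rule ccontr)
    assume nk: "\<not> ?thesis"
    have "\<forall>k\<in>{1..n}. \<exists>q. pr_ideal q \<and> Is k \<subseteq> q \<and> \<not> I \<subseteq> q"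
    proof
      fix k assume k: "k \<in> {1..n}"
      let ?J = "ext_ideal f (Is k)"
      have Jid: "cr_ideal ?J" unfolding ext_ideal_def by (rule ideal_gen_ideal)
      have "\<not> f ` I \<subseteq> ?J"
        using nk k ideal_gen_least[OF Jid] unfolding ext_ideal_def[of f I] by blast
      then obtain a where a: "a \<in> I" "f a \<notin> ?J" by blast
      then obtain P where P: "pr_ideal P" "?J \<subseteq> P" "f a \<notin> P"
        using vnr_prime[OF assms(1) Jid] by blast
      have "Is k \<subseteq> f -` P"
        using P(2) ideal_gen_sub[of "f ` Is k"] unfolding ext_ideal_def by blast
      moreover have "\<not> I \<subseteq> f -` P" using a P by blast
      ultimately show "\<exists>q. pr_ideal q \<and> Is k \<subseteq> q \<and> \<not> I \<subseteq> q" using pre[OF P(1)] by blast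
    qed
    then obtain Q where Q: "\<forall>k\<in>{1..n}. pr_ideal (Q k) \<and> Is k \<subseteq> Q k \<and> \<not> I \<subseteq> Q k"
      by metis
    have "I \<subseteq> (\<Union>k\<in>{1..n}. Q k)" using cov Q by blast
    then obtain k where "k \<in> {1..n}" "I \<subseteq> Q k"
      using prime_avoid[of "{1..n}" I Q] I Q by blast
    then show False using Q by blast
  qed
qed

end
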